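(* Let $\Omega$ be an algebraically closed field and let $C$ be a non-empty finite set of elements of $\Omega^\times$. Then there exist only finitely many inequivalent decompositions of the form $C=A_1\cdots A_k$ with each $\#A_i>1$.
   Context: For finite multisets $A,B$ of elements of $\Omega^\times$, $AB=\{ab:a\in A,b\in B\}$ denotes the multiset of pairwise products (and $A_1\cdots A_k$ is defined iteratively); for a single element $a$, $aB=\{a\}B$. Write $A\sim B$ if there is $\xi\in\Omega^\times$ with $\xi A=B$. Two decompositions $C=A_1\cdots A_k$ and $C=B_1\cdots B_l$ (equalities of multisets, the $A_i,B_j$ being finite multisets in $\Omega^\times$) are equivalent if $k=l$ and, after reordering, $A_i\sim B_i$ for every $i$. *)

theory Defs
  imports "HOL-Computational_Algebra.Polynomial" "HOL-Library.Multiset"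
begin

definition mset_times :: "'a::field multiset \<Rightarrow> 'a multiset \<Rightarrow> 'a multiset" where
  "mset_times A B = (\<Sum>a\<in>#A. image_mset (\<lambda>b. a * b) B)"

fun mset_prod_list :: "'a::field multiset list \<Rightarrow> 'a multiset" where
  "mset_prod_list [] = {#1#}"
| "mset_prod_list [A] = A"
| "mset_prod_list (A # As) = mset_times A (mset_prod_list As)"

definition mset_sim :: "'a::field multiset \<Rightarrow> 'a multiset \<Rightarrow> bool" where
  "mset_sim A B \<longleftrightarrow> (\<exists>\<xi>. \<xi> \<noteq> 0 \<and> image_mset (\<lambda>a. \<xi> * a) A = B)"

definition is_decomp :: "'a::field set \<Rightarrow> 'a multiset list \<Rightarrow> bool" where
  "is_decomp C As \<longleftrightarrow> As \<noteq> [] \<and> (\<forall>A\<in>set As. 0 \<notin># A \<and> size A > 1)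
      \<and> mset_prod_list As = mset_set C"

definition decomp_equiv :: "'a::field multiset list \<Rightarrow> 'a multiset list \<Rightarrow> bool" where
  "decomp_equiv As Bs \<longleftrightarrow> length As = length Bs \<and>
     (\<exists>\<sigma>::nat\<Rightarrow>nat. bij_betw \<sigma> {..<length As} {..<length As} \<and> (\<forall>i<length As. mset_sim (As ! i) (Bs ! \<sigma> i)))"

end

theory Submission
  imports Defs
begin

lemma fin_submsets: "finite {B. B \<subseteq># X}"
proof -
  have "{B. B \<subseteq># X} \<subseteq> mset ` {xs. set xs \<subseteq> set_mset X \<and> length xs \<le> size X}"
  proof
    fix B assume "B \<in> {B. B \<subseteq># X}"
    hence h: "B \<subseteq># X" by simp
    obtain xs where xs: "mset xs = B" using ex_mset by blast
    have "set xs \<subseteq> set_mset X" using xs h by (metis set_mset_mono set_mset_mset)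
    moreover have "length xs \<le> size X" using xs h by (metis size_mset size_mset_mono)
    ultimately show "B \<in> mset ` {xs. set xs \<subseteq> set_mset X \<and> length xs \<le> size X}"
      using xs by blast
  qed
  thus ?thesis using finite_lists_length_le[of "set_mset X" "size X"]
    by (meson finite_imageI finite_set_mset finite_subset)
qed

lemma mt_empty[simp]: "mset_times {#} B = {#}"
  by (simp add: mset_times_def)

lemma mt_add[simp]: "mset_times (add_mset a A) B = image_mset ((*) a) B + mset_times A B"
  by (simp add: mset_times_def)

lemma mpl_cons: "mset_prod_list (A # As) = (if As = [] then A else mset_times A (mset_prod_list As))"
  by (cases As) auto

lemma mt_scale:
  "mset_times (image_mset ((*) x) A) (image_mset ((*) y) B) = image_mset ((*) (x*y)) (mset_times A B)"
  by (induction A) (auto simp: multiset.map_comp o_def mult_ac)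

lemma mpl_scale:
  "ps \<noteq> [] \<Longrightarrow> mset_prod_list (map (\<lambda>(x,A). image_mset ((*) x) A) ps)
     = image_mset ((*) (prod_list (map fst ps))) (mset_prod_list (map snd ps))"
proof (induction ps)
  case Nil thus ?case by simp
next
  case (Cons p ps)
  show ?case
  proof (cases "ps = []")
    case True thus ?thesis by (cases p) auto
  next
    case False
    thus ?thesis using Cons by (cases p) (simp add: mpl_cons mt_scale)
  qed
qed

lemma mt_size: "size (mset_times A B) = size A * size B"
  by (induction A) auto

lemma mt_sub1: "1 \<in># B \<Longrightarrow> A \<subseteq># mset_times A B"
proof (induction A)
  case empty thus ?case by simp
next
  case (add a A)
  have "{#a#} \<subseteq># image_mset ((*) a) B" using add.prems
    by (metis image_mset_add_mset insert_DiffM mult_1_right single_subset_iff union_single_eq_member)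
  hence "add_mset a A \<subseteq># image_mset ((*) a) B + mset_times A B"
    using add by (metis add_mset_add_single subset_mset.add_mono union_commute)
  thus ?case by simp
qed

lemma mt_sub2: "1 \<in># A \<Longrightarrow> B \<subseteq># mset_times A B"
proof -
  assume "1 \<in># A"
  then obtain A' where "A = add_mset 1 A'" by (metis insert_DiffM)
  hence "mset_times A B = B + mset_times A' B" by (simp add: multiset.map_ident_strong)
  thus ?thesis by simp
qed

lemma mt_one: "1 \<in># A \<Longrightarrow> 1 \<in># B \<Longrightarrow> 1 \<in># mset_times A B"
  using mt_sub1 by (metis mset_subset_eqD)

lemma mpl_sub:
  "Bs \<noteq> [] \<Longrightarrow> \<forall>B\<in>set Bs. 1 \<in># B \<Longrightarrow>
    1 \<in># mset_prod_list Bs \<and> (\<forall>B\<in>set Bs. B \<subseteq># mset_prod_list Bs)"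
proof (induction Bs)
  case Nil thus ?case by simp
next
  case (Cons A Bs)
  show ?case
  proof (cases "Bs = []")
    case True thus ?thesis using Cons by simp
  next
    case False
    with Cons have IH: "1 \<in># mset_prod_list Bs" "\<forall>B\<in>set Bs. B \<subseteq># mset_prod_list Bs" by auto
    have a1: "1 \<in># A" using Cons by simp
    have "\<forall>B\<in>set Bs. B \<subseteq># mset_times A (mset_prod_list Bs)"
      using IH(2) mt_sub2[OF a1] subset_mset.order_trans by blast
    thus ?thesis using False IH a1 mt_one[OF a1 IH(1)] mt_sub1[OF IH(1)] by (simp add: mpl_cons)
  qed
qed

lemma mpl_size:
  "Bs \<noteq> [] \<Longrightarrow> \<forall>B\<in>set Bs. size B > 1 \<Longrightarrow> size (mset_prod_list Bs) \<ge> 2 ^ length Bs"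
proof (induction Bs)
  case Nil thus ?case by simp
next
  case (Cons A Bs)
  show ?case
  proof (cases "Bs = []")
    case True thus ?thesis using Cons by simp
  next
    case False
    with Cons have IH: "size (mset_prod_list Bs) \<ge> 2 ^ length Bs" by auto
    have "size A \<ge> 2" using Cons by simp
    hence "size A * size (mset_prod_list Bs) \<ge> 2 * 2 ^ length Bs"
      using IH mult_le_mono by blast
    thus ?thesis using False by (simp add: mpl_cons mt_size)
  qed
qed

theorem lemma4p3:
  fixes C :: "'a::alg_closed_field set"
  assumes "finite C" and "C \<noteq> {}" and "0 \<notin> C"
  shows "\<exists>F. finite F \<and> (\<forall>As. is_decomp C As \<longrightarrow> (\<exists>Bs\<in>F. decomp_equiv As Bs))"
proof -
  define M where "M = (\<Union>x\<in>C. {B. B \<subseteq># image_mset ((*) (inverse x)) (mset_set C)})"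
  have finM: "finite M" unfolding M_def using assms(1) fin_submsets by blast
  define F where "F = {Bs. set Bs \<subseteq> M \<and> length Bs \<le> card C}"
  have "finite F" unfolding F_def using finite_lists_length_le[OF finM] by simp
  moreover have "\<exists>Bs\<in>F. decomp_equiv As Bs" if d: "is_decomp C As" for As
  proof -
    define pk where "pk = (\<lambda>A::'a multiset. SOME a. a \<in># A)"
    have pk: "pk A \<in># A" "pk A \<noteq> 0" if "A \<in> set As" for A
    proof -
      have "size A > 1" "0 \<notin># A" using d that unfolding is_decomp_def by auto
      hence "A \<noteq> {#}" by auto
      thus "pk A \<in># A" unfolding pk_def by (meson multiset_nonemptyE someI)
      thus "pk A \<noteq> 0" using \<open>0 \<notin># A\<close> by auto
    qed
    define ps where "ps = map (\<lambda>A. (inverse (pk A), A)) As"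
    define Bs where "Bs = map (\<lambda>(x,A). image_mset ((*) x) A) ps"
    define e where "e = prod_list (map fst ps)"
    have ne: "As \<noteq> []" using d unfolding is_decomp_def by simp
    have snd: "map snd ps = As" unfolding ps_def by (induction As) auto
    have prodB: "mset_prod_list Bs = image_mset ((*) e) (mset_set C)"
      unfolding Bs_def e_def using mpl_scale[of ps] ne d snd
      unfolding is_decomp_def ps_def by simp
    have B1: "\<forall>B\<in>set Bs. 1 \<in># B"
    proof
      fix B assume "B \<in> set Bs"
      then obtain A where A: "A \<in> set As" "B = image_mset ((*) (inverse (pk A))) A"
        unfolding Bs_def ps_def by auto
      have "inverse (pk A) * pk A = 1" using pk[OF A(1)] by simp
      thus "1 \<in># B" using A pk[OF A(1)] by (metis image_eqI set_image_mset)
    qed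
    have Bne: "Bs \<noteq> []" using ne unfolding Bs_def ps_def by simp
    from mpl_sub[OF Bne B1] prodB have
      one: "1 \<in># image_mset ((*) e) (mset_set C)"
      and sub: "\<forall>B\<in>set Bs. B \<subseteq># image_mset ((*) e) (mset_set C)" by auto
    from one obtain x where x: "x \<in> C" "e * x = 1" using assms(1) by auto
    hence ex: "e = inverse x" by (metis inverse_unique mult.commute)
    have "set Bs \<subseteq> M" unfolding M_def using sub x(1) ex by blast
    moreover have "length Bs \<le> card C"
    proof -
      have "\<forall>B\<in>set As. size B > 1" using d unfolding is_decomp_def by auto
      hence "2 ^ length As \<le> size (mset_prod_list As)" using mpl_size ne by blast
      also have "\<dots> = card C" using d unfolding is_decomp_def by simp
      finally have "length As < card C"
        by (meson less_exp order_less_le_trans)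
      thus ?thesis unfolding Bs_def ps_def by simp
    qed
    ultimately have "Bs \<in> F" unfolding F_def by simp
    moreover have "decomp_equiv As Bs"
      unfolding decomp_equiv_def
    proof (intro conjI exI[of _ id])
      show "length As = length Bs" unfolding Bs_def ps_def by simp
      show "bij_betw id {..<length As} {..<length As}" by simp
      show "\<forall>i<length As. mset_sim (As ! i) (Bs ! id i)"
      proof (intro allI impI)
        fix i assume i: "i < length As"
        hence "As ! i \<in> set As" by simp
        have lp: "length ps = length As" unfolding ps_def by simp
        have pi: "ps ! i = (inverse (pk (As ! i)), As ! i)" unfolding ps_def using i by (simp only: nth_map)
        have "Bs ! id i = (\<lambda>(x,A). image_mset ((*) x) A) (ps ! i)"
          unfolding Bs_def using i lp by (simp only: nth_map id_apply)
        hence "Bs ! id i = image_mset ((*) (inverse (pk (As ! i)))) (As ! i)"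
          using pi by (simp only: prod.case)
        moreover have "inverse (pk (As ! i)) \<noteq> 0" using pk(2)[OF \<open>As ! i \<in> set As\<close>] by simp
        ultimately show "mset_sim (As ! i) (Bs ! id i)" unfolding mset_sim_def
          by (intro exI[of _ "inverse (pk (As ! i))"] conjI) simp_all
      qed
    qed
    ultimately show ?thesis by blast
  qed
  ultimately show ?thesis by blast
qed

end
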